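(* Let $p$ be an odd prime, $q=p^m$, $q=et+1$ with integers $e\geq 2,t\geq 1$, $R_{e,q}=\mathbb{F}_q[u]/\langle u^e-1\rangle$ with orthogonal idempotents $\mu_1,\dots,\mu_e$ (see context), and assume $\gcd(n,q)=1$. Let $\mathcal{C}=\bigoplus_{i=1}^e\mu_i\mathcal{C}_i$ be a cyclic code of length $n$ over $R_{e,q}$. Then $\mathcal{C}$ is an LCD code if and only if $\mathcal{C}_i$ is a reversible code of length $n$ over $\mathbb{F}_q$ for every $1\leq i\leq e$.
   Context: Write $u^e-1=\prod_{i=1}^e(u-\alpha_i)$ over $\mathbb{F}_q$, $G_i=u-\alpha_i$, $\widehat{G}_i=(u^e-1)/G_i$, $z_iG_i+h_i\widehat{G}_i=1$, $\mu_i=h_i\widehat{G}_i$; these are pairwise orthogonal idempotents summing to $1$. For a linear code $\mathcal{C}\subseteq R_{e,q}^n$, $\mathcal{C}_i=\{s_i\in\mathbb{F}_q^n:\exists\, s_j\ (j\neq i)\text{ with }\sum_{j}s_j\mu_j\in\mathcal{C}\}$ and $\mathcal{C}=\bigoplus_i\mu_i\mathcal{C}_i$. A code is LCD if $\mathcal{C}\cap\mathcal{C}^\perp=\{0\}$ (Euclidean dual). A cyclic code is reversible if $(c_0,\dots,c_{n-1})\in\mathcal{C}$ implies $(c_{n-1},\dots,c_1,c_0)\in\mathcal{C}$. *)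

theory Defs
  imports "HOL-Computational_Algebra.Polynomial"
begin

text \<open>The ring R_{e,q} = F_q[u]/(u^e - 1): elements are represented by their canonical
  representatives, polynomials of degree < e; multiplication is reduction mod u^e - 1.\<close>

definition ue1 :: "nat \<Rightarrow> 'a::field poly" where
  "ue1 e = monom 1 e - 1"

definition Rset :: "nat \<Rightarrow> 'a::field poly set" where
  "Rset e = {f. f mod ue1 e = f}"

definition rmult :: "nat \<Rightarrow> 'a::field poly \<Rightarrow> 'a poly \<Rightarrow> 'a poly" where
  "rmult e f g = (f * g) mod ue1 e"

definition Rvecs :: "nat \<Rightarrow> nat \<Rightarrow> 'a::field poly list set" where
  "Rvecs e n = {v. length v = n \<and> set v \<subseteq> Rset e}"

definition R_linear_code :: "nat \<Rightarrow> nat \<Rightarrow> 'a::field poly list set \<Rightarrow> bool" where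
  "R_linear_code e n C \<longleftrightarrow> C \<subseteq> Rvecs e n \<and> replicate n 0 \<in> C \<and>
     (\<forall>x\<in>C. \<forall>y\<in>C. map2 (+) x y \<in> C) \<and>
     (\<forall>r\<in>Rset e. \<forall>x\<in>C. map (rmult e r) x \<in> C)"

definition cshift :: "'b list \<Rightarrow> 'b list" where
  "cshift c = (if c = [] then [] else last c # butlast c)"

definition is_cyclic :: "'b list set \<Rightarrow> bool" where
  "is_cyclic C \<longleftrightarrow> (\<forall>c\<in>C. cshift c \<in> C)"

definition R_inner :: "nat \<Rightarrow> 'a::field poly list \<Rightarrow> 'a poly list \<Rightarrow> 'a poly" where
  "R_inner e x y = (\<Sum>j<length x. x ! j * y ! j) mod ue1 e"

definition R_dual :: "nat \<Rightarrow> nat \<Rightarrow> 'a::field poly list set \<Rightarrow> 'a poly list set" where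
  "R_dual e n C = {y \<in> Rvecs e n. \<forall>x\<in>C. R_inner e x y = 0}"

definition R_LCD :: "nat \<Rightarrow> nat \<Rightarrow> 'a::field poly list set \<Rightarrow> bool" where
  "R_LCD e n C \<longleftrightarrow> C \<inter> R_dual e n C = {replicate n 0}"

definition Gpol :: "(nat \<Rightarrow> 'a::field) \<Rightarrow> nat \<Rightarrow> 'a poly" where
  "Gpol \<alpha> i = [:- \<alpha> i, 1:]"

definition Ghat :: "nat \<Rightarrow> (nat \<Rightarrow> 'a::field) \<Rightarrow> nat \<Rightarrow> 'a poly" where
  "Ghat e \<alpha> i = ue1 e div Gpol \<alpha> i"

definition hpol :: "nat \<Rightarrow> (nat \<Rightarrow> 'a::field) \<Rightarrow> nat \<Rightarrow> 'a poly" where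
  "hpol e \<alpha> i = (SOME h. \<exists>z. z * Gpol \<alpha> i + h * Ghat e \<alpha> i = 1)"

definition mu :: "nat \<Rightarrow> (nat \<Rightarrow> 'a::field) \<Rightarrow> nat \<Rightarrow> 'a poly" where
  "mu e \<alpha> i = (hpol e \<alpha> i * Ghat e \<alpha> i) mod ue1 e"

text \<open>Component codes C_i = {s_i \<in> F_q^n. \<exists> s_j (j \<noteq> i). \<Sum>_j s_j mu_j \<in> C}.\<close>
definition comb :: "nat \<Rightarrow> (nat \<Rightarrow> 'a::field) \<Rightarrow> nat \<Rightarrow> (nat \<Rightarrow> 'a list) \<Rightarrow> 'a poly list" where
  "comb e \<alpha> n s = map (\<lambda>k. \<Sum>j\<in>{1..e}. smult (s j ! k) (mu e \<alpha> j)) [0..<n]"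

definition comp_code :: "nat \<Rightarrow> (nat \<Rightarrow> 'a::field) \<Rightarrow> nat \<Rightarrow> 'a poly list set \<Rightarrow> nat \<Rightarrow> 'a list set" where
  "comp_code e \<alpha> n C i = {v. length v = n \<and>
      (\<exists>s. s i = v \<and> (\<forall>j\<in>{1..e}. length (s j) = n) \<and> comb e \<alpha> n s \<in> C)}"

definition reversible :: "'b list set \<Rightarrow> bool" where
  "reversible D \<longleftrightarrow> (\<forall>c\<in>D. rev c \<in> D)"

end

theory Submission
  imports Defs "HOL-Number_Theory.Cong"
begin

lemma coeff_ue1: "coeff (ue1 m :: 'a::field poly) k = (if k = m then 1 else 0) - (if k = 0 then 1 else 0)"
  by (simp add: ue1_def coeff_monom)

lemma degree_ue1: "m \<ge> 1 \<Longrightarrow> degree (ue1 m :: 'a::field poly) = m"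
proof (rule antisym)
  assume m: "m \<ge> 1"
  show "degree (ue1 m :: 'a poly) \<le> m" by (rule degree_le) (auto simp: coeff_ue1)
  show "m \<le> degree (ue1 m :: 'a poly)" by (rule le_degree) (use m in \<open>auto simp: coeff_ue1\<close>)
qed

lemma ue1_nz: "m \<ge> 1 \<Longrightarrow> (ue1 m :: 'a::field poly) \<noteq> 0"
  using degree_ue1[of m] by (metis degree_0 not_one_le_zero)

lemma red_iff:
  assumes "m \<ge> 1"
  shows "((f::'a::field poly) mod ue1 m = f) \<longleftrightarrow> (\<forall>k\<ge>m. coeff f k = 0)"
proof
  assume h: "f mod ue1 m = f"
  show "\<forall>k\<ge>m. coeff f k = 0"
  proof (cases "f = 0")
    case False
    then have "degree f < m" using degree_mod_less[OF ue1_nz[OF assms], of f] h degree_ue1[OF assms] by metis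
    then show ?thesis by (auto intro: coeff_eq_0)
  qed simp
next
  assume h: "\<forall>k\<ge>m. coeff f k = 0"
  show "f mod ue1 m = f"
  proof (cases "f = 0")
    case False
    have "degree f \<le> m - 1" using h assms by (intro degree_le) auto
    then have "degree f < m" using assms by arith
    then have "degree f < degree (ue1 m :: 'a poly)" using degree_ue1[OF assms, where 'a='a] by linarith
    then show ?thesis by (rule mod_poly_less)
  qed simp
qed

lemma red_iff_deg:
  assumes "m \<ge> 1"
  shows "((f::'a::field poly) mod ue1 m = f) \<longleftrightarrow> (f = 0 \<or> degree f < m)"
  unfolding red_iff[OF assms]
proof
  assume h: "\<forall>k\<ge>m. coeff f k = 0"
  show "f = 0 \<or> degree f < m"
  proof (rule ccontr)
    assume "\<not> (f = 0 \<or> degree f < m)"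
    then have "f \<noteq> 0" "degree f \<ge> m" by auto
    then show False using h leading_coeff_0_iff by blast
  qed
next
  assume "f = 0 \<or> degree f < m"
  then show "\<forall>k\<ge>m. coeff f k = 0" by (auto intro: coeff_eq_0)
qed

lemma of_nat_card_zero: "of_nat (card (UNIV::'a::{ring_1,finite} set)) = (0::'a)"
proof -
  have "(\<Sum>x\<in>(UNIV::'a set). x) = (\<Sum>x\<in>UNIV. x + 1)"
    by (rule sum.reindex_bij_witness[of _ "\<lambda>x. x + 1" "\<lambda>x. x - 1"]) auto
  also have "\<dots> = (\<Sum>x\<in>UNIV. x) + of_nat (card (UNIV::'a set))"
    unfolding sum.distrib by simp
  finally show ?thesis by (metis add_cancel_left_right)
qed



lemma ue1_eq: "monom 1 n = ue1 n + (1::'a::field poly)" by (simp add: ue1_def)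

lemma monom_mod_ue1:
  assumes "n \<ge> 1"
  shows "monom c a mod ue1 n = monom c (a mod n) mod (ue1 n :: 'a::field poly)"
proof -
  have eq: "monom c a = monom c (a mod n) * (monom 1 n) ^ (a div n)"
    by (simp add: monom_power mult_monom mult.commute)
  have p1: "monom 1 n mod ue1 n = (1::'a poly) mod ue1 n"
    unfolding ue1_eq by (simp add: mod_simps)
  have "((monom 1 n) ^ (a div n)) mod ue1 n = ((1::'a poly) ^ (a div n)) mod ue1 n"
    by (metis p1 power_mod)
  then have "((monom 1 n) ^ (a div n)) mod ue1 n = 1 mod (ue1 n :: 'a poly)" by simp
  then show ?thesis unfolding eq by (metis mod_mult_right_eq mult.right_neutral)
qed

lemma monom_mod_ue1_cong:
  assumes "n \<ge> 1" "a mod n = b mod n"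
  shows "monom c a mod ue1 n = monom c b mod (ue1 n :: 'a::field poly)"
  using monom_mod_ue1[OF assms(1)] assms(2) by metis

definition sx :: "nat \<Rightarrow> 'a::field poly \<Rightarrow> 'a poly" where
  "sx n f = pcompose f (monom 1 (n - 1))"

lemma pcompose_X_power: "pcompose ([:0, 1:] ^ k) q = q ^ k"
  by (induct k) (simp_all add: pcompose_mult pcompose_pCons pcompose_1)

lemma pcompose_monom: "pcompose (monom c k) q = smult c (q ^ k)"
  by (simp add: monom_altdef pcompose_smult pcompose_X_power)

lemma sx_mult: "sx n (f * g) = sx n f * sx n g" by (simp add: sx_def pcompose_mult)
lemma sx_add: "sx n (f + g) = sx n f + sx n g" by (simp add: sx_def pcompose_add)
lemma sx_diff: "sx n (f - g) = sx n f - sx n g" by (simp add: sx_def pcompose_diff)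
lemma sx_0: "sx n 0 = 0" by (simp add: sx_def)
lemma sx_1: "sx n 1 = 1" by (simp add: sx_def pcompose_1)

lemma sx_ue1: "n \<ge> 1 \<Longrightarrow> sx n (ue1 n :: 'a::field poly) mod ue1 n = 0"
proof -
  assume n: "n \<ge> 1"
  have E: "sx n (ue1 n :: 'a poly) = monom 1 ((n - 1) * n) - 1"
    by (simp add: sx_def ue1_def pcompose_diff pcompose_monom monom_power pcompose_1)
  have M: "monom 1 ((n - 1) * n) mod ue1 n = monom (1::'a) 0 mod ue1 n"
    using n by (intro monom_mod_ue1_cong) auto
  have "sx n (ue1 n :: 'a poly) mod ue1 n = (monom 1 ((n - 1) * n) mod ue1 n - 1) mod ue1 n"
    unfolding E by (rule mod_diff_left_eq[symmetric])
  also have "\<dots> = (1 mod ue1 n - 1) mod ue1 n" using M by simp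
  also have "\<dots> = 0" by (simp only: mod_diff_left_eq) simp
  finally show ?thesis .
qed

lemma sx_cong:
  assumes n: "n \<ge> 1" and h: "f mod ue1 n = g mod (ue1 n :: 'a::field poly)"
  shows "sx n f mod ue1 n = sx n g mod ue1 n"
proof -
  from h obtain k where k: "f - g = ue1 n * k" by (metis dvdE mod_eq_dvd_iff)
  have "sx n f - sx n g = sx n (ue1 n) * sx n k" by (metis k sx_diff sx_mult)
  moreover have "ue1 n dvd sx n (ue1 n :: 'a poly)" using sx_ue1[OF n] by (simp add: dvd_eq_mod_eq_0)
  ultimately have "ue1 n dvd sx n f - sx n g" by simp
  then show ?thesis by (simp add: mod_eq_dvd_iff)
qed

lemma pcompose_cong2:
  assumes "q mod M = q' mod (M :: 'a::field poly)"
  shows "pcompose f q mod M = pcompose f q' mod M"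
proof (induct f)
  case 0
  then show ?case by simp
next
  case (pCons a p)
  have "pcompose (pCons a p) q mod M = ([:a:] + q * pcompose p q) mod M" by (simp add: pcompose_pCons)
  also have "\<dots> = ([:a:] + (q mod M) * (pcompose p q mod M)) mod M" by (metis mod_add_right_eq mod_mult_eq)
  also have "\<dots> = ([:a:] + (q' mod M) * (pcompose p q' mod M)) mod M" using pCons assms by simp
  also have "\<dots> = pcompose (pCons a p) q' mod M" by (metis mod_add_right_eq mod_mult_eq pcompose_pCons)
  finally show ?case .
qed

lemma sx_invol:
  assumes n: "n \<ge> 1"
  shows "sx n (sx n f) mod ue1 n = f mod (ue1 n :: 'a::field poly)"
proof -
  have "sx n (sx n f) = pcompose f (monom 1 ((n - 1) * (n - 1)))"
    by (simp add: sx_def pcompose_assoc[symmetric] pcompose_monom monom_power)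
  moreover have "monom 1 ((n - 1) * (n - 1)) mod ue1 n = monom (1::'a) 1 mod ue1 n"
  proof (rule monom_mod_ue1_cong[OF n])
    show "(n - 1) * (n - 1) mod n = 1 mod n"
    proof (cases "n = 1")
      case False
      then have "(n - 1) * (n - 1) = n * (n - 2) + 1" using n
      proof -
        define k where "k = n - 2"
        have "n = k + 2" using n False unfolding k_def by arith
        then show ?thesis by (simp add: algebra_simps)
      qed
      then have "(n - 1) * (n - 1) mod n = 1 mod n" by (metis add.commute mod_mult_self2)
      then show ?thesis by simp
    qed simp
  qed
  ultimately have "sx n (sx n f) mod ue1 n = pcompose f (monom 1 1) mod ue1 n"
    using pcompose_cong2 by metis
  also have "monom (1::'a) 1 = [:0, 1:]" by (simp add: monom_Suc monom_0)
  finally show ?thesis by simp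
qed



definition vecn :: "nat \<Rightarrow> 'a::zero poly \<Rightarrow> 'a list" where
  "vecn n f = map (coeff f) [0..<n]"

lemma Poly_red: "n \<ge> 1 \<Longrightarrow> length v = n \<Longrightarrow> Poly v mod ue1 n = (Poly v :: 'a::field poly)"
  by (subst red_iff) (auto simp: nth_default_def)

lemma vec_Poly: "length v = n \<Longrightarrow> vecn n (Poly v) = v"
  by (auto simp: vecn_def intro!: nth_equalityI simp: nth_default_def)

lemma Poly_vec: "n \<ge> 1 \<Longrightarrow> f mod ue1 n = f \<Longrightarrow> Poly (vecn n f) = (f :: 'a::field poly)"
proof -
  assume n: "n \<ge> 1" and f: "f mod ue1 n = f"
  have "\<forall>k\<ge>n. coeff f k = 0" using red_iff[OF n] f by blast
  then show ?thesis unfolding poly_eq_iff by (auto simp: vecn_def nth_default_def)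
qed

lemma length_vecn[simp]: "length (vecn n f) = n" by (simp add: vecn_def)

lemma Poly_inj: "length v = n \<Longrightarrow> length w = n \<Longrightarrow> Poly v = Poly w \<Longrightarrow> v = w"
  by (metis vec_Poly)

lemma Poly_add: "length v = length w \<Longrightarrow> Poly (map2 (+) v w) = Poly v + Poly (w :: 'a::comm_ring_1 list)"
proof (induct v arbitrary: w)
  case Nil then show ?case by simp
next
  case (Cons x xs) then show ?case by (cases w) auto
qed

lemma Poly_zeros: "Poly (replicate n 0) = 0" by simp

lemma Poly_eq0: "length v = n \<Longrightarrow> Poly v = 0 \<Longrightarrow> v = replicate n 0"
  by (metis Poly_inj Poly_zeros length_replicate)

lemma pCons0_mod: "pCons 0 h mod M = pCons 0 (h mod M) mod (M :: 'a::field poly)"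
proof -
  have "pCons 0 h = [:0,1:] * h" "pCons 0 (h mod M) = [:0,1:] * (h mod M)" by simp_all
  then show ?thesis by (metis mod_mult_right_eq)
qed

lemma shift_mod:
  assumes n: "n \<ge> 1" and r: "r mod ue1 n = (r :: 'a::field poly)"
  shows "pCons 0 r mod ue1 n = pCons 0 r - smult (coeff r (n - 1)) (ue1 n)"
proof -
  let ?t = "pCons 0 r - smult (coeff r (n - 1)) (ue1 n)"
  have "ue1 n dvd pCons 0 r - ?t" by (simp add: dvd_smult)
  then have "pCons 0 r mod ue1 n = ?t mod ue1 n" by (simp add: mod_eq_dvd_iff)
  moreover have "?t mod ue1 n = ?t"
  proof (subst red_iff[OF n], intro allI impI)
    fix k assume k: "n \<le> k"
    have rk: "\<forall>k\<ge>n. coeff r k = 0" using r red_iff[OF n] by blast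
    show "coeff ?t k = 0"
    proof (cases "k = n")
      case True
      then show ?thesis using n by (cases k) (auto simp: coeff_ue1 coeff_pCons)
    next
      case False
      then have "k > n" using k by simp
      then show ?thesis using n rk by (cases k) (auto simp: coeff_ue1 coeff_pCons)
    qed
  qed
  ultimately show ?thesis by simp
qed

lemma coeff_step:
  assumes n: "n \<ge> 1" and j: "Suc j < n"
  shows "coeff (h mod ue1 n) j = coeff (pCons 0 h mod ue1 n) (Suc j)"
proof -
  have "pCons 0 h mod ue1 n = pCons 0 (h mod ue1 n) mod ue1 n" by (rule pCons0_mod)
  also have "\<dots> = pCons 0 (h mod ue1 n) - smult (coeff (h mod ue1 n) (n - 1)) (ue1 n)"
    by (rule shift_mod[OF n]) simp
  finally show ?thesis using j by (simp add: coeff_ue1)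
qed

lemma coeff_shiftn:
  assumes n: "n \<ge> 1"
  shows "k + d = n - 1 \<Longrightarrow> coeff (h mod ue1 n) k = coeff ((monom 1 d * h) mod ue1 n) (k + d)"
proof (induct d arbitrary: h k)
  case 0 then show ?case by simp
next
  case (Suc d)
  have "coeff (h mod ue1 n) k = coeff (pCons 0 h mod ue1 n) (Suc k)"
    using Suc.prems n by (intro coeff_step) auto
  also have "\<dots> = coeff ((monom 1 d * pCons 0 h) mod ue1 n) (Suc k + d)"
    using Suc.prems by (intro Suc.hyps) auto
  also have "monom 1 d * pCons 0 h = monom 1 (Suc d) * h"
  proof -
    have "pCons 0 h = monom 1 1 * h" by (simp add: monom_Suc monom_0)
    then show ?thesis by (simp add: mult.assoc[symmetric] mult_monom)
  qed
  finally show ?case by simp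
qed

lemma coeff_mod_low:
  assumes n: "n \<ge> 1" and dh: "degree h \<le> 2 * n - 2"
  shows "coeff (h mod ue1 n) (n - 1) = coeff (h :: 'a::field poly) (n - 1)"
proof -
  define q where "q = h div ue1 n"
  define r where "r = h mod ue1 n"
  have h: "h = q * ue1 n + r" by (simp add: q_def r_def)
  have Pn: "ue1 n \<noteq> (0::'a poly)" "degree (ue1 n :: 'a poly) = n" using ue1_nz[OF n] degree_ue1[OF n] by auto
  have cq: "coeff q (n - 1) = 0"
  proof (cases "q = 0")
    case False
    have dr: "r = 0 \<or> degree r < n" using degree_mod_less[OF Pn(1), of h] Pn(2) r_def by auto
    have dqP: "degree (q * ue1 n) = degree q + n" using False Pn by (simp add: degree_mult_eq)
    have "degree h = degree (q * ue1 n)"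
    proof (cases "r = 0")
      case False
      then have "degree r < degree (q * ue1 n)" using dr dqP by auto
      then show ?thesis unfolding h by (rule degree_add_eq_left)
    qed (simp add: h)
    then have "degree q < n - 1" using dh dqP n by linarith
    then show ?thesis by (simp add: coeff_eq_0)
  qed simp
  have "coeff (q * ue1 n) (n - 1) = coeff (monom 1 n * q) (n - 1) - coeff q (n - 1)"
    by (simp add: ue1_def algebra_simps)
  also have "\<dots> = 0" using cq n by (simp add: coeff_monom_mult)
  finally have "coeff (q * ue1 n) (n - 1) = 0" .
  then have "coeff h (n - 1) = coeff r (n - 1)" by (subst h) simp
  then show ?thesis by (simp add: r_def)
qed



definition dotv :: "'a::comm_ring_1 list \<Rightarrow> 'a list \<Rightarrow> 'a" where
  "dotv v w = (\<Sum>k<length v. v ! k * w ! k)"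

lemma dotv_Poly:
  assumes n: "n \<ge> 1" and v: "length v = n" and w: "length w = n"
  shows "dotv v w = coeff (Poly v * Poly (rev w)) (n - 1)"
proof -
  have A: "{..n - Suc 0} = {..<n}" using n by auto
  have "coeff (Poly v * Poly (rev w)) (n - 1) = (\<Sum>i<n. nth_default 0 v i * nth_default 0 (rev w) (n - 1 - i))"
    by (simp add: coeff_mult A)
  also have "\<dots> = (\<Sum>i<n. v ! i * w ! i)"
  proof (rule sum.cong)
    fix i assume "i \<in> {..<n}"
    then have i: "i < n" by simp
    then have "rev w ! (n - 1 - i) = w ! i" using w by (simp add: rev_nth)
    then show "nth_default 0 v i * nth_default 0 (rev w) (n - 1 - i) = v ! i * w ! i"
      using i v w by (simp add: nth_default_def)
  qed simp
  finally show ?thesis by (simp add: dotv_def v)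
qed

lemma Poly_cshift:
  assumes n: "n \<ge> 1" and v: "length v = n"
  shows "Poly (cshift v) = pCons 0 (Poly v) mod ue1 n"
proof -
  have ne: "v \<noteq> []" using n v by auto
  define c where "c = last v"
  define b where "b = butlast v"
  have vb: "v = b @ [c]" using ne by (simp add: b_def c_def)
  have lb: "length b = n - 1" using v by (simp add: b_def)
  have Pv: "Poly v = Poly b + monom c (n - 1)"
    unfolding vb Poly_append using lb by (simp add: smult_monom)
  have cv: "coeff (Poly v) (n - 1) = c"
    using v vb lb n by (simp add: nth_default_def nth_append)
  have "pCons 0 (Poly v) mod ue1 n = pCons 0 (Poly v) - smult c (ue1 n)"
    using shift_mod[OF n Poly_red[OF n v]] cv by simp
  also have "\<dots> = pCons c (Poly b)"
  proof -
    have e1: "smult c (ue1 n) = monom c n - [:c:]" by (simp add: ue1_def smult_diff_right smult_monom)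
    have e2: "pCons 0 (Poly b + monom c (n - 1)) = pCons 0 (Poly b) + pCons 0 (monom c (n - 1))"
      by (subst add_pCons) simp
    have M1: "pCons 0 (monom c (n - 1)) = monom c n" using n
      by (metis Suc_diff_1 less_le_trans monom_Suc zero_less_one)
    have "pCons 0 (Poly v) - smult c (ue1 n) = pCons 0 (Poly b) + [:c:]"
      unfolding Pv e1 e2 M1 by simp
    then show ?thesis by simp
  qed
  finally have "pCons 0 (Poly v) mod ue1 n = pCons c (Poly b)" .
  moreover have "cshift v = c # b" using ne by (simp add: cshift_def b_def c_def)
  ultimately show ?thesis by simp
qed

lemma Poly_sum_monom: "length w = n \<Longrightarrow> Poly w = (\<Sum>k<n. monom (w ! k) k)"
  unfolding poly_eq_iff by (auto simp: coeff_sum coeff_monom nth_default_def)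

lemma Poly_rev_sx:
  assumes n: "n \<ge> 1" and w: "length w = n"
  shows "Poly (rev w) mod ue1 n = (monom 1 (n - 1) * sx n (Poly w)) mod (ue1 n :: 'a::field poly)"
proof -
  have "Poly (rev w) = (\<Sum>k<n. monom (rev w ! k) k)" using w by (simp add: Poly_sum_monom)
  also have "\<dots> = (\<Sum>k<n. monom (w ! (n - Suc k)) (n - Suc (n - Suc k)))"
    using w by (intro sum.cong) (auto simp: rev_nth)
  also have "\<dots> = (\<Sum>k<n. monom (w ! k) (n - Suc k))"
    by (rule sum.nat_diff_reindex)
  finally have R: "Poly (rev w) = (\<Sum>k<n. monom (w ! k) (n - Suc k))" .
  have "sx n (Poly w) = (\<Sum>k<n. monom (w ! k) ((n - 1) * k))"
    using w by (simp add: Poly_sum_monom sx_def pcompose_sum pcompose_monom monom_power smult_monom)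
  then have S: "monom 1 (n - 1) * sx n (Poly w) = (\<Sum>k<n. monom (w ! k) ((n - 1) + (n - 1) * k))"
    by (simp add: sum_distrib_left mult_monom)
  have T: "monom (w ! k) (n - Suc k) mod ue1 n = monom (w ! k) ((n - 1) + (n - 1) * k) mod (ue1 n :: 'a poly)"
    if k: "k < n" for k
  proof (rule monom_mod_ue1_cong[OF n])
    obtain m where m: "n = Suc m" using n by (cases n) auto
    have "(n - 1) + (n - 1) * k = (n - Suc k) + n * k" using k unfolding m by (simp add: algebra_simps)
    then show "(n - Suc k) mod n = ((n - 1) + (n - 1) * k) mod n" by simp
  qed
  have "Poly (rev w) mod ue1 n = (\<Sum>k<n. monom (w ! k) (n - Suc k) mod ue1 n) mod ue1 n"
    unfolding R by (simp add: mod_sum_eq)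
  also have "\<dots> = (\<Sum>k<n. monom (w ! k) ((n - 1) + (n - 1) * k) mod ue1 n) mod ue1 n"
  proof -
    have "(\<Sum>k<n. monom (w ! k) (n - Suc k) mod ue1 n) = (\<Sum>k<n. monom (w ! k) ((n - 1) + (n - 1) * k) mod ue1 n)"
      by (rule sum.cong[OF refl]) (rule T, simp)
    then show ?thesis by simp
  qed
  also have "\<dots> = (monom 1 (n - 1) * sx n (Poly w)) mod ue1 n"
    unfolding S by (simp add: mod_sum_eq)
  finally show ?thesis .
qed



lemma min_deg_elem:
  assumes "x \<in> S" "x \<noteq> 0"
  shows "\<exists>m\<in>S. m \<noteq> 0 \<and> (\<forall>y\<in>S. y \<noteq> 0 \<longrightarrow> degree m \<le> degree (y :: 'a::zero poly))"
  using ex_has_least_nat[of "\<lambda>y. y \<in> S \<and> y \<noteq> 0" x degree] assms by blast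

lemma poly_bezout:
  fixes g h :: "'a::field poly"
  assumes g: "g \<noteq> 0" and cd: "\<And>k. k dvd g \<Longrightarrow> k dvd h \<Longrightarrow> degree k = 0"
  shows "\<exists>a b. a * g + b * h = 1"
proof -
  define S where "S = {a * g + b * h | a b. True}"
  have gS: "g \<in> S" unfolding S_def by (rule CollectI, rule exI[of _ 1], rule exI[of _ 0]) simp
  obtain m where mS: "m \<in> S" and m0: "m \<noteq> 0" and mmin: "\<forall>y\<in>S. y \<noteq> 0 \<longrightarrow> degree m \<le> degree y"
    using min_deg_elem[OF gS g] by blast
  obtain a0 b0 where m: "m = a0 * g + b0 * h" using mS unfolding S_def by blast
  have divs: "m dvd x" if xS: "x \<in> S" for x
  proof -
    obtain a1 b1 where x: "x = a1 * g + b1 * h" using xS unfolding S_def by blast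
    have "x mod m = (a1 - (x div m) * a0) * g + (b1 - (x div m) * b0) * h"
      using div_mult_mod_eq[of x m] unfolding m x by (simp add: algebra_simps)
    then have "x mod m \<in> S" unfolding S_def by blast
    moreover have "x mod m = 0 \<or> degree (x mod m) < degree m" using degree_mod_less[OF m0] by blast
    ultimately have "x mod m = 0" using mmin by force
    then show ?thesis by (simp add: mod_eq_0_iff_dvd)
  qed
  have "h \<in> S" unfolding S_def by (rule CollectI, rule exI[of _ 0], rule exI[of _ 1]) simp
  then have "degree m = 0" using cd divs gS by blast
  then obtain c where c: "m = [:c:]" by (metis degree_eq_zeroE)
  then have c0: "c \<noteq> 0" using m0 by simp
  have "smult (inverse c) a0 * g + smult (inverse c) b0 * h = smult (inverse c) m"
    unfolding m by (simp add: smult_add_right)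
  also have "\<dots> = 1" using c c0 by simp
  finally show ?thesis by blast
qed

lemma red_add: "n \<ge> 1 \<Longrightarrow> f mod ue1 n = f \<Longrightarrow> g mod ue1 n = g \<Longrightarrow> (f + g) mod ue1 n = (f + g :: 'a::field poly)"
  by (simp add: red_iff)

lemma red_diff: "n \<ge> 1 \<Longrightarrow> f mod ue1 n = f \<Longrightarrow> g mod ue1 n = g \<Longrightarrow> (f - g) mod ue1 n = (f - g :: 'a::field poly)"
  by (simp add: red_iff)

lemma red_smult: "n \<ge> 1 \<Longrightarrow> f mod ue1 n = f \<Longrightarrow> smult c f mod ue1 n = (smult c f :: 'a::field poly)"
  by (simp add: red_iff)

lemma red_mod: "n \<ge> 1 \<Longrightarrow> (f mod ue1 n) mod ue1 n = (f mod ue1 n :: 'a::field poly)"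
  by simp

lemma red_cong_eq: "f mod ue1 n = f \<Longrightarrow> g mod ue1 n = g \<Longrightarrow> [f = g] (mod ue1 n) \<Longrightarrow> f = (g :: 'a::field poly)"
  by (metis cong_def)

lemma cong_mod_self: "[x mod M = x] (mod (M :: 'a::field poly))"
  by (simp add: cong_def)

lemma X_unit: "n \<ge> 1 \<Longrightarrow> [pCons 0 (monom 1 (n - 1)) = 1] (mod (ue1 n :: 'a::field poly))"
proof -
  assume n: "n \<ge> 1"
  have "pCons 0 (monom 1 (n - 1)) = (monom 1 n :: 'a poly)" using n
    by (metis Suc_diff_1 less_le_trans monom_Suc zero_less_one)
  also have "\<dots> = ue1 n + 1" by (simp add: ue1_def)
  finally show ?thesis by (simp add: cong_iff_dvd_diff)
qed

lemma pderiv_ue1: "n \<ge> 1 \<Longrightarrow> smult (of_nat n) 1 = pCons 0 (pderiv (ue1 n)) - smult (of_nat n) (ue1 n :: 'a::field poly)"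
proof -
  assume n: "n \<ge> 1"
  have "pderiv (ue1 n :: 'a poly) = monom (of_nat n) (n - 1)" by (simp add: ue1_def pderiv_monom pderiv_diff)
  moreover have "pCons 0 (monom (of_nat n :: 'a) (n - 1)) = monom (of_nat n) n" using n
    by (metis Suc_diff_1 less_le_trans monom_Suc zero_less_one)
  ultimately show ?thesis by (simp add: ue1_def smult_monom smult_diff_right)
qed



definition Fdual :: "nat \<Rightarrow> 'a::comm_ring_1 list set \<Rightarrow> 'a list set" where
  "Fdual n D = {w. length w = n \<and> (\<forall>v\<in>D. dotv v w = 0)}"

lemma cong_0_mod: "[x = 0] (mod M) \<longleftrightarrow> x mod M = (0 :: 'a::field poly)"
  by (simp add: cong_def)

context
  fixes n :: nat and D :: "'a::field list set"
  assumes n1: "n \<ge> 1" and nch: "of_nat n \<noteq> (0::'a)"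
    and Dlen: "\<forall>v\<in>D. length v = n" and D0: "replicate n 0 \<in> D"
    and Dadd: "\<forall>v\<in>D. \<forall>w\<in>D. map2 (+) v w \<in> D"
    and Dsc: "\<forall>c. \<forall>v\<in>D. map ((*) c) v \<in> D"
    and Dcyc: "\<forall>v\<in>D. cshift v \<in> D"
begin

lemma I_red: "f \<in> Poly ` D \<Longrightarrow> f mod ue1 n = f"
  using Poly_red[OF n1] Dlen by auto

lemma I0: "0 \<in> Poly ` D"
  using D0 by (metis Poly_zeros imageI)

lemma I_add: "f \<in> Poly ` D \<Longrightarrow> g \<in> Poly ` D \<Longrightarrow> f + g \<in> Poly ` D"
proof -
  assume "f \<in> Poly ` D" "g \<in> Poly ` D"
  then obtain v w where v: "v \<in> D" "f = Poly v" and w: "w \<in> D" "g = Poly w" by auto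
  then have "f + g = Poly (map2 (+) v w)" using Dlen by (simp add: Poly_add)
  then show ?thesis using Dadd v w by auto
qed

lemma I_smult: "f \<in> Poly ` D \<Longrightarrow> smult c f \<in> Poly ` D"
proof -
  assume "f \<in> Poly ` D"
  then obtain v where v: "v \<in> D" "f = Poly v" by auto
  then show ?thesis using Dsc by (auto simp: smult_Poly)
qed

lemma I_diff: "f \<in> Poly ` D \<Longrightarrow> g \<in> Poly ` D \<Longrightarrow> f - g \<in> Poly ` D"
  using I_add[of f "smult (-1) g"] I_smult[of g "-1"] by simp

lemma I_X: "f \<in> Poly ` D \<Longrightarrow> pCons 0 f mod ue1 n \<in> Poly ` D"
proof -
  assume "f \<in> Poly ` D"
  then obtain v where v: "v \<in> D" "f = Poly v" by auto
  have "length v = n" using Dlen v by auto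
  then have "pCons 0 f mod ue1 n = Poly (cshift v)" by (simp add: Poly_cshift[OF n1] v)
  then show ?thesis using Dcyc v by auto
qed

lemma I_ideal: "f \<in> Poly ` D \<Longrightarrow> (g * f) mod ue1 n \<in> Poly ` D"
proof (induct g)
  case 0 then show ?case using I0 by simp
next
  case (pCons a g)
  let ?t = "smult a f + pCons 0 ((g * f) mod ue1 n) mod ue1 n"
  have "(g * f) mod ue1 n \<in> Poly ` D" using pCons by simp
  then have "pCons 0 ((g * f) mod ue1 n) mod ue1 n \<in> Poly ` D" by (rule I_X)
  then have tI: "?t \<in> Poly ` D" using I_smult[OF pCons.prems] by (intro I_add)
  have tr: "?t mod ue1 n = ?t" using tI by (rule I_red)
  have "[pCons a g * f = ?t] (mod ue1 n)"
  proof -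
    have "pCons a g * f = smult a f + pCons 0 (g * f)" by simp
    moreover have "[pCons 0 (g * f) = pCons 0 ((g * f) mod ue1 n) mod ue1 n] (mod ue1 n)"
      by (simp add: cong_def pCons0_mod[of "g * f"])
    ultimately show ?thesis using cong_add[OF cong_refl[of "smult a f"]] by simp
  qed
  then have "(pCons a g * f) mod ue1 n = ?t" using tr by (simp add: cong_def)
  then show ?case using tI by simp
qed


lemma I_dual:
  assumes w: "length w = n"
  shows "(\<forall>v\<in>D. dotv v w = 0) \<longleftrightarrow> (\<forall>f\<in>Poly ` D. [f * sx n (Poly w) = 0] (mod ue1 n))"
proof -
  define R where "R = Poly (rev w)"
  define S where "S = sx n (Poly w)"
  define y where "y = (monom 1 (n - 1) :: 'a poly)"
  have RS: "[R = y * S] (mod ue1 n)" unfolding R_def S_def y_def using Poly_rev_sx[OF n1 w] by (simp add: cong_def)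
  have Rred: "R mod ue1 n = R" unfolding R_def by (rule Poly_red[OF n1]) (simp add: w)
  have degR: "degree R \<le> n - 1" using Rred red_iff_deg[OF n1, of R] by auto
  have A: "(\<forall>v\<in>D. dotv v w = 0) \<longleftrightarrow> (\<forall>f\<in>Poly ` D. [f * R = 0] (mod ue1 n))"
  proof
    assume H: "\<forall>v\<in>D. dotv v w = 0"
    show "\<forall>f\<in>Poly ` D. [f * R = 0] (mod ue1 n)"
    proof
      fix f assume fI: "f \<in> Poly ` D"
      have "coeff ((f * R) mod ue1 n) k = 0" for k
      proof (cases "k < n")
        case False
        have "(f * R) mod ue1 n mod ue1 n = (f * R) mod ue1 n" by simp
        then have "\<forall>k\<ge>n. coeff ((f * R) mod ue1 n) k = 0" using red_iff[OF n1] by blast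
        then show ?thesis using False by simp
      next
        case True
        define d where "d = n - 1 - k"
        have kd: "k + d = n - 1" using True unfolding d_def by simp
        have "coeff ((f * R) mod ue1 n) k = coeff ((monom 1 d * (f * R)) mod ue1 n) (n - 1)"
          using coeff_shiftn[OF n1 kd] kd by simp
        also have "(monom 1 d * (f * R)) mod ue1 n = (((monom 1 d * f) mod ue1 n) * R) mod ue1 n"
          by (simp add: mod_mult_left_eq mult.assoc)
        also have "coeff \<dots> (n - 1) = coeff (((monom 1 d * f) mod ue1 n) * R) (n - 1)"
        proof (rule coeff_mod_low[OF n1])
          have "degree ((monom 1 d * f) mod ue1 n) \<le> n - 1"
            using red_iff_deg[OF n1, of "(monom 1 d * f) mod ue1 n"] by auto
          then show "degree ((monom 1 d * f) mod ue1 n * R) \<le> 2 * n - 2"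
            using degR degree_mult_le[of "(monom 1 d * f) mod ue1 n" R] by linarith
        qed
        also have "\<dots> = 0"
        proof -
          have "(monom 1 d * f) mod ue1 n \<in> Poly ` D" using I_ideal fI by blast
          then obtain v where v: "v \<in> D" "(monom 1 d * f) mod ue1 n = Poly v" by auto
          then show ?thesis using H dotv_Poly[OF n1 _ w] Dlen unfolding R_def by auto
        qed
        finally show ?thesis .
      qed
      then show "[f * R = 0] (mod ue1 n)" by (simp add: cong_0_mod poly_eq_iff)
    qed
  next
    assume H: "\<forall>f\<in>Poly ` D. [f * R = 0] (mod ue1 n)"
    show "\<forall>v\<in>D. dotv v w = 0"
    proof
      fix v assume v: "v \<in> D"
      have fr: "Poly v mod ue1 n = Poly v" using I_red v by blast
      have "degree (Poly v) \<le> n - 1" using fr red_iff_deg[OF n1, of "Poly v"] by auto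
      then have dg: "degree (Poly v * R) \<le> 2 * n - 2" using degR degree_mult_le[of "Poly v" R] by linarith
      have "dotv v w = coeff (Poly v * R) (n - 1)" using dotv_Poly[OF n1 _ w] Dlen v unfolding R_def by auto
      also have "\<dots> = coeff ((Poly v * R) mod ue1 n) (n - 1)" using coeff_mod_low[OF n1 dg] by simp
      also have "(Poly v * R) mod ue1 n = 0" using H v by (simp add: cong_0_mod)
      finally show "dotv v w = 0" by simp
    qed
  qed
  have B: "[f * R = 0] (mod ue1 n) \<longleftrightarrow> [f * S = 0] (mod ue1 n)" for f
  proof
    have c1: "[f * R = y * (f * S)] (mod ue1 n)" using cong_scalar_left[OF RS, of f] by (simp add: ac_simps)
    assume "[f * R = 0] (mod ue1 n)"
    then have c2: "[y * (f * S) = 0] (mod ue1 n)" using cong_trans[OF cong_sym[OF c1]] by blast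
    have "[f * S = pCons 0 y * (f * S)] (mod ue1 n)"
      using cong_scalar_right[OF X_unit[OF n1], of "f * S"] unfolding y_def by (simp add: cong_sym)
    also have "pCons 0 y * (f * S) = [:0,1:] * (y * (f * S))" by simp
    also have "[\<dots> = [:0,1:] * 0] (mod ue1 n)" using c2 by (rule cong_scalar_left)
    finally show "[f * S = 0] (mod ue1 n)" by simp
  next
    assume h: "[f * S = 0] (mod ue1 n)"
    have "[f * R = f * (y * S)] (mod ue1 n)" using RS by (rule cong_scalar_left)
    also have "f * (y * S) = y * (f * S)" by (simp add: ac_simps)
    also have "[\<dots> = y * 0] (mod ue1 n)" using h by (rule cong_scalar_left)
    finally show "[f * R = 0] (mod ue1 n)" by simp
  qed
  show ?thesis using A B unfolding S_def by blast
qed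


lemma I_rev: "reversible D \<longleftrightarrow> (\<forall>g\<in>Poly ` D. sx n g mod ue1 n \<in> Poly ` D)"
proof
  assume rv: "reversible D"
  show "\<forall>g\<in>Poly ` D. sx n g mod ue1 n \<in> Poly ` D"
  proof
    fix g assume "g \<in> Poly ` D"
    then obtain w where w: "w \<in> D" "g = Poly w" by auto
    have lw: "length w = n" using Dlen w by auto
    have "Poly (rev w) \<in> Poly ` D" using rv w unfolding reversible_def by auto
    then have tI: "([:0,1:] * Poly (rev w)) mod ue1 n \<in> Poly ` D" by (rule I_ideal)
    have "[[:0,1:] * Poly (rev w) = [:0,1:] * (monom 1 (n - 1) * sx n g)] (mod ue1 n)"
      using Poly_rev_sx[OF n1 lw] w by (intro cong_scalar_left) (simp add: cong_def)
    also have "[:0,1:] * (monom 1 (n - 1) * sx n g) = pCons 0 (monom 1 (n - 1)) * sx n g" by simp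
    also have "[\<dots> = 1 * sx n g] (mod ue1 n)" by (rule cong_scalar_right[OF X_unit[OF n1]])
    finally have "([:0,1:] * Poly (rev w)) mod ue1 n = sx n g mod ue1 n" by (simp add: cong_def)
    then show "sx n g mod ue1 n \<in> Poly ` D" using tI by simp
  qed
next
  assume H: "\<forall>g\<in>Poly ` D. sx n g mod ue1 n \<in> Poly ` D"
  show "reversible D" unfolding reversible_def
  proof
    fix w assume w: "w \<in> D"
    have lw: "length w = n" using Dlen w by auto
    have "sx n (Poly w) mod ue1 n \<in> Poly ` D" using H w by auto
    then have tI: "(monom 1 (n - 1) * (sx n (Poly w) mod ue1 n)) mod ue1 n \<in> Poly ` D" by (rule I_ideal)
    have "(monom 1 (n - 1) * (sx n (Poly w) mod ue1 n)) mod ue1 n = (monom 1 (n - 1) * sx n (Poly w)) mod ue1 n"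
      by (simp add: mod_mult_right_eq)
    also have "\<dots> = Poly (rev w) mod ue1 n" using Poly_rev_sx[OF n1 lw] by simp
    also have "\<dots> = Poly (rev w)" by (rule Poly_red[OF n1]) (simp add: lw)
    finally have "Poly (rev w) \<in> Poly ` D" using tI by simp
    then obtain v where v: "v \<in> D" "Poly (rev w) = Poly v" by auto
    have "rev w = v" using Poly_inj[of "rev w" n v] v Dlen lw by auto
    then show "rev w \<in> D" using v by simp
  qed
qed

lemma I_idem: "\<exists>e\<in>Poly ` D. \<forall>f\<in>Poly ` D. [e * f = f] (mod ue1 n)"
proof (cases "\<forall>f\<in>Poly ` D. f = 0")
  case True
  then show ?thesis using I0 by auto
next
  case False
  then obtain x where "x \<in> Poly ` D" "x \<noteq> 0" by auto
  then obtain g where gI: "g \<in> Poly ` D" and g0: "g \<noteq> 0" and gmin: "\<forall>y\<in>Poly ` D. y \<noteq> 0 \<longrightarrow> degree g \<le> degree y"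
    using min_deg_elem by blast
  have gred: "g mod ue1 n = g" using gI by (rule I_red)
  have dgn: "degree g < n" using gred g0 red_iff_deg[OF n1, of g] by auto
  have smallred: "r mod ue1 n = r" if "r = 0 \<or> degree r < degree g" for r :: "'a poly"
    using that dgn red_iff_deg[OF n1, of r] by auto
  have gdiv: "g dvd f" if fI: "f \<in> Poly ` D" for f
  proof -
    have fr: "f mod ue1 n = f" using fI by (rule I_red)
    have mr: "(f mod g) mod ue1 n = f mod g" by (rule smallred) (rule degree_mod_less[OF g0])
    have qg: "(f div g) * g = f - f mod g" by (simp add: minus_mod_eq_div_mult)
    have "((f div g) * g) mod ue1 n \<in> Poly ` D" using gI by (rule I_ideal)
    moreover have "((f div g) * g) mod ue1 n = (f div g) * g" unfolding qg using red_diff[OF n1 fr mr] .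
    ultimately have "(f div g) * g \<in> Poly ` D" by simp
    then have "f - (f div g) * g \<in> Poly ` D" using fI by (intro I_diff)
    then have "f mod g \<in> Poly ` D" by (simp add: qg)
    then have "f mod g = 0"
    proof (rule contrapos_pp)
      assume "f mod g \<noteq> 0"
      then have "degree (f mod g) < degree g" by (rule degree_mod_less'[OF g0])
      then show "f mod g \<notin> Poly ` D" using gmin \<open>f mod g \<noteq> 0\<close> by (meson not_le)
    qed
    then show ?thesis by (simp add: mod_eq_0_iff_dvd)
  qed
  have gP: "g dvd ue1 n"
  proof -
    define r where "r = ue1 n mod g"
    have "- r = 0 \<or> degree (- r) < degree g" using degree_mod_less[OF g0, of "ue1 n"] unfolding r_def by simp
    then have rr: "(- r) mod ue1 n = - r" by (rule smallred)
    have "((ue1 n div g) * g) mod ue1 n \<in> Poly ` D" using gI by (rule I_ideal)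
    moreover have "[(ue1 n div g) * g = - r] (mod ue1 n)"
      unfolding cong_iff_dvd_diff r_def by (simp add: minus_mod_eq_div_mult)
    ultimately have "- r \<in> Poly ` D" using rr by (simp add: cong_def)
    then have "smult (-1) (- r) \<in> Poly ` D" by (rule I_smult)
    then have "r \<in> Poly ` D" by simp
    then have "r = 0"
    proof (rule contrapos_pp)
      assume "r \<noteq> 0"
      then have "degree r < degree g" unfolding r_def by (rule degree_mod_less'[OF g0])
      then show "r \<notin> Poly ` D" using gmin \<open>r \<noteq> 0\<close> by (meson not_le)
    qed
    then show ?thesis unfolding r_def by (simp add: mod_eq_0_iff_dvd)
  qed
  define h where "h = ue1 n div g"
  have Pgh: "ue1 n = g * h" using gP unfolding h_def by simp
  have cd: "degree k = 0" if kg: "k dvd g" and kh: "k dvd h" for k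
  proof -
    have kP: "k dvd ue1 n" using kg Pgh by simp
    have "k dvd pderiv (ue1 n)" unfolding Pgh pderiv_mult using kg kh by simp
    then have "k dvd [:0,1:] * pderiv (ue1 n)" by (rule dvd_mult)
    then have "k dvd pCons 0 (pderiv (ue1 n))" by simp
    moreover have "k dvd smult (of_nat n) (ue1 n)" using kP by (simp add: dvd_smult)
    ultimately have "k dvd smult (of_nat n) 1" unfolding pderiv_ue1[OF n1] by (rule dvd_diff)
    moreover have "smult (of_nat n) (1 :: 'a poly) \<noteq> 0" using nch by simp
    ultimately have "degree k \<le> degree (smult (of_nat n) (1 :: 'a poly))" by (rule dvd_imp_degree_le)
    then show ?thesis by simp
  qed
  obtain a b where ab: "a * g + b * h = 1" using poly_bezout[OF g0 cd] by blast
  define e where "e = (a * g) mod ue1 n"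
  have eI: "e \<in> Poly ` D" unfolding e_def using gI by (rule I_ideal)
  have "[e * f = f] (mod ue1 n)" if fI: "f \<in> Poly ` D" for f
  proof -
    obtain k where fk: "f = g * k" using gdiv[OF fI] by blast
    have "[e * f = (a * g) * f] (mod ue1 n)" unfolding e_def by (rule cong_scalar_right) (simp add: cong_def)
    moreover have "[(a * g) * f = f] (mod ue1 n)"
    proof -
      have "(a * g) * f - f = (a * g - 1) * f" by (simp add: algebra_simps)
      also have "a * g - 1 = - (b * h)" using ab by (simp add: algebra_simps eq_neg_iff_add_eq_0)
      also have "- (b * h) * f = ue1 n * (- (b * k))" unfolding fk Pgh by (simp add: algebra_simps)
      finally show ?thesis unfolding cong_iff_dvd_diff by simp
    qed
    ultimately show ?thesis by (rule cong_trans)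
  qed
  then show ?thesis using eI by blast
qed



lemma YM: "D \<inter> Fdual n D = {replicate n 0} \<longleftrightarrow> reversible D"
proof -
  obtain e where eI: "e \<in> Poly ` D" and idem: "\<forall>f\<in>Poly ` D. [e * f = f] (mod ue1 n)"
    using I_idem by blast
  have Z: "replicate n 0 \<in> D \<inter> Fdual n D"
    using D0 Dlen by (auto simp: Fdual_def dotv_def intro!: sum.neutral)
  have memdual: "w \<in> D \<inter> Fdual n D \<longleftrightarrow> w \<in> D \<and> (\<forall>f\<in>Poly ` D. [f * sx n (Poly w) = 0] (mod ue1 n))" for w
    using I_dual Dlen unfolding Fdual_def by auto
  show ?thesis
  proof
    assume LCD: "D \<inter> Fdual n D = {replicate n 0}"
    define se where "se = sx n e"
    define c where "c = e - (se * e) mod ue1 n"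
    have cI: "c \<in> Poly ` D" unfolding c_def using eI I_ideal[OF eI] by (intro I_diff)
    then obtain vc where vc: "vc \<in> D" "c = Poly vc" by auto
    have "[f * sx n c = 0] (mod ue1 n)" if fI: "f \<in> Poly ` D" for f
    proof -
      have "[sx n ((se * e) mod ue1 n) = sx n (se * e)] (mod ue1 n)"
        unfolding cong_def by (rule sx_cong[OF n1]) simp
      also have "sx n (se * e) = sx n se * se" by (simp add: sx_mult se_def)
      also have "[\<dots> = e * se] (mod ue1 n)" unfolding se_def
        by (rule cong_scalar_right) (simp add: cong_def sx_invol[OF n1])
      finally have c1: "[sx n ((se * e) mod ue1 n) = e * se] (mod ue1 n)" .
      have "sx n c = se - sx n ((se * e) mod ue1 n)" unfolding c_def se_def by (simp add: sx_diff)
      then have "[sx n c = se - e * se] (mod ue1 n)" using cong_diff[OF cong_refl c1] by simp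
      then have "[f * sx n c = f * (se - e * se)] (mod ue1 n)" by (rule cong_scalar_left)
      also have "f * (se - e * se) = se * (f - e * f)" by (simp add: algebra_simps)
      also have "[\<dots> = se * (f - f)] (mod ue1 n)"
        using idem fI by (intro cong_scalar_left cong_diff cong_refl) auto
      finally show ?thesis by simp
    qed
    then have "vc \<in> D \<inter> Fdual n D" using memdual vc by auto
    then have "vc = replicate n 0" using LCD by auto
    then have "c = 0" using vc by simp
    then have e1: "[e = se * e] (mod ue1 n)" unfolding c_def using I_red[OF eI] by (simp add: cong_def)
    have "[se = sx n (se * e)] (mod ue1 n)" unfolding cong_def using sx_cong[OF n1 e1[unfolded cong_def]] se_def by simp
    also have "sx n (se * e) = sx n se * se" by (simp add: sx_mult se_def)
    also have "[\<dots> = e * se] (mod ue1 n)" unfolding se_def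
      by (rule cong_scalar_right) (simp add: cong_def sx_invol[OF n1])
    also have "e * se = se * e" by simp
    also have "[\<dots> = e] (mod ue1 n)" using e1 by (rule cong_sym)
    finally have se_e: "[se = e] (mod ue1 n)" .
    have "\<forall>g\<in>Poly ` D. sx n g mod ue1 n \<in> Poly ` D"
    proof
      fix g assume gI: "g \<in> Poly ` D"
      have "[sx n g = sx n (e * g)] (mod ue1 n)"
        unfolding cong_def by (rule sx_cong[OF n1]) (use idem gI in \<open>auto simp: cong_def\<close>)
      also have "sx n (e * g) = se * sx n g" by (simp add: sx_mult se_def)
      also have "[\<dots> = e * sx n g] (mod ue1 n)" using se_e by (rule cong_scalar_right)
      also have "e * sx n g = sx n g * e" by simp
      finally have "sx n g mod ue1 n = (sx n g * e) mod ue1 n" by (simp add: cong_def)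
      then show "sx n g mod ue1 n \<in> Poly ` D" using I_ideal[OF eI] by simp
    qed
    then show "reversible D" using I_rev by blast
  next
    assume rv: "reversible D"
    have "D \<inter> Fdual n D \<subseteq> {replicate n 0}"
    proof
      fix w assume wD: "w \<in> D \<inter> Fdual n D"
      then have wD1: "w \<in> D" and dual: "\<forall>f\<in>Poly ` D. [f * sx n (Poly w) = 0] (mod ue1 n)"
        using memdual by auto
      define g where "g = Poly w"
      have gI: "g \<in> Poly ` D" using wD1 g_def by auto
      define s where "s = sx n g mod ue1 n"
      have sI: "s \<in> Poly ` D" using rv I_rev gI s_def by blast
      have "[s = e * s] (mod ue1 n)" using idem sI by (meson cong_sym)
      also have "[e * s = e * sx n g] (mod ue1 n)" unfolding s_def by (rule cong_scalar_left) (simp add: cong_def)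
      also have "[e * sx n g = 0] (mod ue1 n)" using dual eI g_def by auto
      finally have "[s = 0] (mod ue1 n)" .
      then have "sx n g mod ue1 n = 0 mod ue1 n" unfolding s_def by (simp add: cong_def)
      then have "sx n (sx n g) mod ue1 n = sx n 0 mod ue1 n" by (rule sx_cong[OF n1])
      then have "g mod ue1 n = 0" using sx_invol[OF n1, of g] by (simp add: sx_0)
      then have "g = 0" using I_red[OF gI] by simp
      then have "w = replicate n 0" using Poly_eq0[of w n] Dlen wD1 g_def by auto
      then show "w \<in> {replicate n 0}" by simp
    qed
    then show "D \<inter> Fdual n D = {replicate n 0}" using Z by blast
  qed
qed


end



definition ev :: "(nat \<Rightarrow> 'a::field) \<Rightarrow> nat \<Rightarrow> 'a poly list \<Rightarrow> 'a list" where
  "ev \<alpha> i c = map (\<lambda>f. poly f (\<alpha> i)) c"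

lemma length_ev[simp]: "length (ev \<alpha> i c) = length c" by (simp add: ev_def)

lemma cshift_map: "cshift (map f xs) = map f (cshift xs)"
  by (simp add: cshift_def last_map map_butlast)

lemma red_sum: "m \<ge> 1 \<Longrightarrow> (\<And>x. x \<in> A \<Longrightarrow> f x mod ue1 m = f x) \<Longrightarrow> (\<Sum>x\<in>A. f x) mod ue1 m = (\<Sum>x\<in>A. f x :: 'a::field poly)"
  by (simp add: red_iff coeff_sum)

context
  fixes e :: nat and \<alpha> :: "nat \<Rightarrow> 'a::field"
  assumes e1: "e \<ge> 1" and prodG: "(\<Prod>i\<in>{1..e}. Gpol \<alpha> i) = ue1 e"
    and inj: "inj_on \<alpha> {1..e}"
begin

lemma R_root: "i \<in> {1..e} \<Longrightarrow> poly (ue1 e) (\<alpha> i) = 0"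
  unfolding prodG[symmetric] poly_prod by (rule prod_zero) (auto simp: Gpol_def)

lemma R_modev: "i \<in> {1..e} \<Longrightarrow> poly (f mod ue1 e) (\<alpha> i) = poly f (\<alpha> i)"
proof -
  assume i: "i \<in> {1..e}"
  have "poly f (\<alpha> i) = poly ((f div ue1 e) * ue1 e + f mod ue1 e) (\<alpha> i)" by simp
  also have "\<dots> = poly (f div ue1 e) (\<alpha> i) * poly (ue1 e) (\<alpha> i) + poly (f mod ue1 e) (\<alpha> i)"
    by (simp only: poly_add poly_mult)
  also have "\<dots> = poly (f mod ue1 e) (\<alpha> i)" using R_root[OF i] by simp
  finally show ?thesis by simp
qed

lemma R_uniq:
  assumes f: "f mod ue1 e = f" and g: "g mod ue1 e = g"
    and ev: "\<forall>i\<in>{1..e}. poly f (\<alpha> i) = poly g (\<alpha> i)"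
  shows "f = g"
proof (rule ccontr)
  assume ne: "f \<noteq> g"
  define d where "d = f - g"
  have d0: "d \<noteq> 0" using ne d_def by simp
  have "d mod ue1 e = d" unfolding d_def by (rule red_diff[OF e1 f g])
  then have dd: "degree d < e" using d0 red_iff_deg[OF e1, of d] by auto
  have sub: "\<alpha> ` {1..e} \<subseteq> {x. poly d x = 0}" using ev by (auto simp: d_def)
  have "e = card (\<alpha> ` {1..e})" using card_image[OF inj] by simp
  also have "\<dots> \<le> card {x. poly d x = 0}" by (rule card_mono[OF poly_roots_finite[OF d0] sub])
  also have "\<dots> \<le> degree d" by (rule card_poly_roots_bound[OF d0])
  finally show False using dd by simp
qed

lemma G_nz: "Gpol \<alpha> i \<noteq> 0" by (simp add: Gpol_def)

lemma Ghat_eq: "i \<in> {1..e} \<Longrightarrow> Ghat e \<alpha> i = (\<Prod>j\<in>{1..e} - {i}. Gpol \<alpha> j)"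
proof -
  assume i: "i \<in> {1..e}"
  have "ue1 e = Gpol \<alpha> i * (\<Prod>j\<in>{1..e} - {i}. Gpol \<alpha> j)"
    unfolding prodG[symmetric] using i by (simp add: prod.remove)
  then show ?thesis unfolding Ghat_def using G_nz by simp
qed

lemma Ghat_ev: "i \<in> {1..e} \<Longrightarrow> j \<in> {1..e} \<Longrightarrow> (poly (Ghat e \<alpha> i) (\<alpha> j) = 0) \<longleftrightarrow> i \<noteq> j"
proof -
  assume i: "i \<in> {1..e}" and j: "j \<in> {1..e}"
  have "poly (Ghat e \<alpha> i) (\<alpha> j) = (\<Prod>l\<in>{1..e} - {i}. \<alpha> j - \<alpha> l)"
    using Ghat_eq[OF i] by (simp add: poly_prod Gpol_def)
  also have "\<dots> = 0 \<longleftrightarrow> (\<exists>l\<in>{1..e} - {i}. \<alpha> j - \<alpha> l = 0)" by (rule prod_zero_iff) simp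
  also have "\<dots> \<longleftrightarrow> i \<noteq> j"
  proof
    assume "\<exists>l\<in>{1..e} - {i}. \<alpha> j - \<alpha> l = 0"
    then obtain l where l0: "l \<in> {1..e} - {i}" "\<alpha> j - \<alpha> l = 0" by blast
    then have l: "l \<in> {1..e}" "l \<noteq> i" "\<alpha> j = \<alpha> l" by auto
    then have "j = l" using inj j unfolding inj_on_def by blast
    then show "i \<noteq> j" using l by simp
  next
    assume "i \<noteq> j"
    then show "\<exists>l\<in>{1..e} - {i}. \<alpha> j - \<alpha> l = 0" using j by auto
  qed
  finally show ?thesis .
qed

lemma hpol_ex: "i \<in> {1..e} \<Longrightarrow> \<exists>z. z * Gpol \<alpha> i + hpol e \<alpha> i * Ghat e \<alpha> i = 1"
proof -
  assume i: "i \<in> {1..e}"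
  define c where "c = poly (Ghat e \<alpha> i) (\<alpha> i)"
  have c0: "c \<noteq> 0" using Ghat_ev[OF i i] c_def by simp
  define h where "h = [:inverse c:]"
  have "poly (1 - h * Ghat e \<alpha> i) (\<alpha> i) = 0" using c0 by (simp add: h_def c_def[symmetric])
  then have "Gpol \<alpha> i dvd 1 - h * Ghat e \<alpha> i" unfolding Gpol_def by (rule poly_eq_0_iff_dvd[THEN iffD1])
  then obtain z where "1 - h * Ghat e \<alpha> i = Gpol \<alpha> i * z" by blast
  then have "\<exists>h z. z * Gpol \<alpha> i + h * Ghat e \<alpha> i = 1" by (metis add_diff_cancel_left' diff_add_cancel mult.commute)
  then show ?thesis unfolding hpol_def by (rule someI_ex)
qed

lemma mu_red: "mu e \<alpha> i mod ue1 e = mu e \<alpha> i" by (simp add: mu_def)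

lemma mu_ev: "i \<in> {1..e} \<Longrightarrow> j \<in> {1..e} \<Longrightarrow> poly (mu e \<alpha> i) (\<alpha> j) = (if i = j then 1 else 0)"
proof -
  assume i: "i \<in> {1..e}" and j: "j \<in> {1..e}"
  obtain z where z: "z * Gpol \<alpha> i + hpol e \<alpha> i * Ghat e \<alpha> i = 1" using hpol_ex[OF i] by blast
  have "poly (mu e \<alpha> i) (\<alpha> j) = poly (hpol e \<alpha> i) (\<alpha> j) * poly (Ghat e \<alpha> i) (\<alpha> j)"
    unfolding mu_def R_modev[OF j] by simp
  also have "\<dots> = (if i = j then 1 else 0)"
  proof (cases "i = j")
    case True
    have "poly (z * Gpol \<alpha> i + hpol e \<alpha> i * Ghat e \<alpha> i) (\<alpha> i) = 1" using z by simp
    then show ?thesis using True by (simp add: Gpol_def)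
  next
    case False
    then show ?thesis using Ghat_ev[OF i j] by simp
  qed
  finally show ?thesis .
qed

lemma comb_nth: "k < n \<Longrightarrow> comb e \<alpha> n s ! k = (\<Sum>j\<in>{1..e}. smult (s j ! k) (mu e \<alpha> j))"
  by (simp add: comb_def)

lemma length_comb[simp]: "length (comb e \<alpha> n s) = n" by (simp add: comb_def)

lemma combsum_red: "(\<Sum>j\<in>{1..e}. smult (a j) (mu e \<alpha> j)) mod ue1 e = (\<Sum>j\<in>{1..e}. smult (a j) (mu e \<alpha> j))"
  by (rule red_sum[OF e1]) (rule red_smult[OF e1 mu_red])

lemma combsum_ev: "i \<in> {1..e} \<Longrightarrow> poly (\<Sum>j\<in>{1..e}. smult (a j) (mu e \<alpha> j)) (\<alpha> i) = a i"
proof -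
  assume i: "i \<in> {1..e}"
  have "poly (\<Sum>j\<in>{1..e}. smult (a j) (mu e \<alpha> j)) (\<alpha> i) = (\<Sum>j\<in>{1..e}. a j * poly (mu e \<alpha> j) (\<alpha> i))"
    by (simp add: poly_sum)
  also have "\<dots> = (\<Sum>j\<in>{1..e}. if j = i then a j else 0)"
    by (rule sum.cong[OF refl]) (use i mu_ev in auto)
  also have "\<dots> = a i" using i by (simp only: sum.delta finite_atLeastAtMost) simp
  finally show ?thesis .
qed

lemma comb_Rvecs: "comb e \<alpha> n s \<in> Rvecs e n"
proof -
  have "x mod ue1 e = x" if "x \<in> set (comb e \<alpha> n s)" for x
  proof -
    obtain k where k: "k < n" "x = comb e \<alpha> n s ! k" using \<open>x \<in> set _\<close> by (auto simp: in_set_conv_nth)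
    show ?thesis unfolding k comb_nth[OF k(1)] by (rule combsum_red)
  qed
  then show ?thesis unfolding Rvecs_def Rset_def by auto
qed

lemma ev_comb: "i \<in> {1..e} \<Longrightarrow> length (s i) = n \<Longrightarrow> ev \<alpha> i (comb e \<alpha> n s) = s i"
proof (rule nth_equalityI)
  assume i: "i \<in> {1..e}" and l: "length (s i) = n"
  show "length (ev \<alpha> i (comb e \<alpha> n s)) = length (s i)" using l by simp
  fix k assume "k < length (ev \<alpha> i (comb e \<alpha> n s))"
  then have k: "k < n" by simp
  show "ev \<alpha> i (comb e \<alpha> n s) ! k = s i ! k"
    unfolding ev_def using k comb_nth[OF k] combsum_ev[OF i, of "\<lambda>j. s j ! k"] by simp
qed

lemma decomp: "c \<in> Rvecs e n \<Longrightarrow> comb e \<alpha> n (\<lambda>j. ev \<alpha> j c) = c"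
proof (rule nth_equalityI)
  assume c: "c \<in> Rvecs e n"
  then have lc: "length c = n" by (simp add: Rvecs_def)
  show "length (comb e \<alpha> n (\<lambda>j. ev \<alpha> j c)) = length c" using lc by simp
  fix k assume "k < length (comb e \<alpha> n (\<lambda>j. ev \<alpha> j c))"
  then have k: "k < n" by simp
  have "c ! k \<in> set c" using k lc by simp
  then have ck: "c ! k mod ue1 e = c ! k" using c unfolding Rvecs_def Rset_def by auto
  show "comb e \<alpha> n (\<lambda>j. ev \<alpha> j c) ! k = c ! k"
    unfolding comb_nth[OF k]
  proof (rule R_uniq[OF combsum_red ck], intro ballI)
    fix i assume i: "i \<in> {1..e}"
    show "poly (\<Sum>j\<in>{1..e}. smult (ev \<alpha> j c ! k) (mu e \<alpha> j)) (\<alpha> i) = poly (c ! k) (\<alpha> i)"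
      using combsum_ev[OF i, of "\<lambda>j. ev \<alpha> j c ! k"] k lc by (simp add: ev_def)
  qed
qed

definition nu :: "nat \<Rightarrow> 'a list \<Rightarrow> 'a poly list" where
  "nu i v = map (\<lambda>a. smult a (mu e \<alpha> i)) v"

lemma ev_nu: "i \<in> {1..e} \<Longrightarrow> j \<in> {1..e} \<Longrightarrow> ev \<alpha> j (nu i v) = (if j = i then v else replicate (length v) 0)"
proof -
  assume i: "i \<in> {1..e}" and j: "j \<in> {1..e}"
  have "ev \<alpha> j (nu i v) = map (\<lambda>a. a * (if i = j then 1 else 0)) v"
    unfolding ev_def nu_def using mu_ev[OF i j] by simp
  then show ?thesis by (cases "j = i") (simp_all add: map_replicate_const)
qed

lemma nu_Rvecs: "length v = n \<Longrightarrow> nu i v \<in> Rvecs e n"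
  unfolding Rvecs_def Rset_def nu_def using red_smult[OF e1 mu_red] by auto

lemma R_inner_ev: "i \<in> {1..e} \<Longrightarrow> length y = length x \<Longrightarrow> poly (R_inner e x y) (\<alpha> i) = dotv (ev \<alpha> i x) (ev \<alpha> i y)"
  unfolding R_inner_def dotv_def by (simp add: R_modev poly_sum ev_def)

lemma R_inner_0: "length y = length x \<Longrightarrow> R_inner e x y = 0 \<longleftrightarrow> (\<forall>i\<in>{1..e}. dotv (ev \<alpha> i x) (ev \<alpha> i y) = 0)"
proof
  assume l: "length y = length x"
  assume "R_inner e x y = 0"
  then show "\<forall>i\<in>{1..e}. dotv (ev \<alpha> i x) (ev \<alpha> i y) = 0" using R_inner_ev[OF _ l] by (metis poly_0)
next
  assume l: "length y = length x"
  assume H: "\<forall>i\<in>{1..e}. dotv (ev \<alpha> i x) (ev \<alpha> i y) = 0"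
  show "R_inner e x y = 0"
  proof (rule R_uniq)
    show "R_inner e x y mod ue1 e = R_inner e x y" by (simp add: R_inner_def)
    show "0 mod ue1 e = (0 :: 'a poly)" by simp
    show "\<forall>i\<in>{1..e}. poly (R_inner e x y) (\<alpha> i) = poly 0 (\<alpha> i)"
      using H R_inner_ev[OF _ l] by simp
  qed
qed


lemma ev_zeros: "ev \<alpha> i (replicate n 0) = replicate n 0" by (simp add: ev_def)

lemma ev_map2: "length x = length y \<Longrightarrow> ev \<alpha> i (map2 (+) x y) = map2 (+) (ev \<alpha> i x) (ev \<alpha> i y)"
  by (rule nth_equalityI) (auto simp: ev_def)

lemma zeros_Fdual: "\<forall>v\<in>D. length v = n \<Longrightarrow> replicate n 0 \<in> Fdual n D"
  by (auto simp: Fdual_def dotv_def intro!: sum.neutral)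

lemma const_red: "[:c:] mod ue1 e = [:c:]"
  using red_iff_deg[OF e1, of "[:c:]"] e1 by auto

context
  fixes n :: nat and C :: "'a poly list set"
  assumes n1: "n \<ge> 1" and nch: "of_nat n \<noteq> (0::'a)"
    and lin: "R_linear_code e n C" and cyc: "is_cyclic C"
begin

lemma C_Rvecs: "c \<in> C \<Longrightarrow> c \<in> Rvecs e n"
  using lin unfolding R_linear_code_def by auto

lemma C_len: "c \<in> C \<Longrightarrow> length c = n"
  using C_Rvecs unfolding Rvecs_def by auto

lemma F1: "c \<in> C \<Longrightarrow> i \<in> {1..e} \<Longrightarrow> ev \<alpha> i c \<in> comp_code e \<alpha> n C i"
  unfolding comp_code_def
  using C_len decomp C_Rvecs by (intro CollectI conjI exI[of _ "\<lambda>j. ev \<alpha> j c"]) auto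

lemma Ci_len: "v \<in> comp_code e \<alpha> n C i \<Longrightarrow> length v = n"
  unfolding comp_code_def by auto

lemma F2:
  assumes i: "i \<in> {1..e}" and v: "v \<in> comp_code e \<alpha> n C i"
  shows "nu i v \<in> C"
proof -
  obtain s where s: "s i = v" "\<forall>j\<in>{1..e}. length (s j) = n" "comb e \<alpha> n s \<in> C" and lv: "length v = n"
    using v unfolding comp_code_def by auto
  have "mu e \<alpha> i \<in> Rset e" by (simp add: Rset_def mu_red)
  then have mC: "map (rmult e (mu e \<alpha> i)) (comb e \<alpha> n s) \<in> C" using lin s(3) unfolding R_linear_code_def by auto
  have "map (rmult e (mu e \<alpha> i)) (comb e \<alpha> n s) = nu i v"
  proof (rule nth_equalityI)
    show "length (map (rmult e (mu e \<alpha> i)) (comb e \<alpha> n s)) = length (nu i v)" using lv by (simp add: nu_def)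
    fix k assume "k < length (map (rmult e (mu e \<alpha> i)) (comb e \<alpha> n s))"
    then have k: "k < n" by simp
    have "rmult e (mu e \<alpha> i) (comb e \<alpha> n s ! k) = smult (v ! k) (mu e \<alpha> i)"
    proof (rule R_uniq)
      show "rmult e (mu e \<alpha> i) (comb e \<alpha> n s ! k) mod ue1 e = rmult e (mu e \<alpha> i) (comb e \<alpha> n s ! k)"
        by (simp add: rmult_def)
      show "smult (v ! k) (mu e \<alpha> i) mod ue1 e = smult (v ! k) (mu e \<alpha> i)" by (rule red_smult[OF e1 mu_red])
      show "\<forall>j\<in>{1..e}. poly (rmult e (mu e \<alpha> i) (comb e \<alpha> n s ! k)) (\<alpha> j) = poly (smult (v ! k) (mu e \<alpha> i)) (\<alpha> j)"
      proof
        fix j assume j: "j \<in> {1..e}"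
        have "poly (rmult e (mu e \<alpha> i) (comb e \<alpha> n s ! k)) (\<alpha> j) = poly (mu e \<alpha> i) (\<alpha> j) * s j ! k"
          unfolding rmult_def R_modev[OF j] comb_nth[OF k] using combsum_ev[OF j, of "\<lambda>j. s j ! k"] by simp
        then show "poly (rmult e (mu e \<alpha> i) (comb e \<alpha> n s ! k)) (\<alpha> j) = poly (smult (v ! k) (mu e \<alpha> i)) (\<alpha> j)"
          using mu_ev[OF i j] s(1) by auto
      qed
    qed
    then show "map (rmult e (mu e \<alpha> i)) (comb e \<alpha> n s) ! k = nu i v ! k" using k lv by (simp add: nu_def)
  qed
  then show ?thesis using mC by simp
qed

lemma ev_nu_self: "i \<in> {1..e} \<Longrightarrow> ev \<alpha> i (nu i v) = v" using ev_nu by simp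

lemma Ci_0: "i \<in> {1..e} \<Longrightarrow> replicate n 0 \<in> comp_code e \<alpha> n C i"
  using F1[of "replicate n 0" i] lin ev_zeros unfolding R_linear_code_def by auto

lemma Ci_add: "i \<in> {1..e} \<Longrightarrow> v \<in> comp_code e \<alpha> n C i \<Longrightarrow> w \<in> comp_code e \<alpha> n C i \<Longrightarrow> map2 (+) v w \<in> comp_code e \<alpha> n C i"
proof -
  assume i: "i \<in> {1..e}" and v: "v \<in> comp_code e \<alpha> n C i" and w: "w \<in> comp_code e \<alpha> n C i"
  have "map2 (+) (nu i v) (nu i w) \<in> C" using F2[OF i v] F2[OF i w] lin unfolding R_linear_code_def by auto
  then have "ev \<alpha> i (map2 (+) (nu i v) (nu i w)) \<in> comp_code e \<alpha> n C i" using F1 i by blast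
  moreover have "ev \<alpha> i (map2 (+) (nu i v) (nu i w)) = map2 (+) v w"
    using Ci_len[OF v] Ci_len[OF w] by (simp add: ev_map2 nu_def ev_nu_self[OF i, unfolded nu_def])
  ultimately show ?thesis by simp
qed

lemma Ci_sc: "i \<in> {1..e} \<Longrightarrow> v \<in> comp_code e \<alpha> n C i \<Longrightarrow> map ((*) c) v \<in> comp_code e \<alpha> n C i"
proof -
  assume i: "i \<in> {1..e}" and v: "v \<in> comp_code e \<alpha> n C i"
  have "[:c:] \<in> Rset e" by (simp add: Rset_def const_red)
  then have "map (rmult e [:c:]) (nu i v) \<in> C" using F2[OF i v] lin unfolding R_linear_code_def by auto
  then have "ev \<alpha> i (map (rmult e [:c:]) (nu i v)) \<in> comp_code e \<alpha> n C i" using F1 i by blast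
  moreover have "ev \<alpha> i (map (rmult e [:c:]) (nu i v)) = map ((*) c) (ev \<alpha> i (nu i v))"
    by (simp add: ev_def rmult_def R_modev[OF i])
  ultimately show ?thesis using ev_nu_self[OF i] by simp
qed

lemma Ci_cyc: "i \<in> {1..e} \<Longrightarrow> v \<in> comp_code e \<alpha> n C i \<Longrightarrow> cshift v \<in> comp_code e \<alpha> n C i"
proof -
  assume i: "i \<in> {1..e}" and v: "v \<in> comp_code e \<alpha> n C i"
  have "cshift (nu i v) \<in> C" using F2[OF i v] cyc unfolding is_cyclic_def by auto
  then have "ev \<alpha> i (cshift (nu i v)) \<in> comp_code e \<alpha> n C i" using F1 i by blast
  moreover have "ev \<alpha> i (cshift (nu i v)) = cshift (ev \<alpha> i (nu i v))"
    by (simp add: ev_def cshift_map)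
  moreover have "ev \<alpha> i (nu i v) = v" by (rule ev_nu_self[OF i])
  ultimately show ?thesis by simp
qed

lemma Ci_YM: "i \<in> {1..e} \<Longrightarrow> (comp_code e \<alpha> n C i \<inter> Fdual n (comp_code e \<alpha> n C i) = {replicate n 0})
    \<longleftrightarrow> reversible (comp_code e \<alpha> n C i)"
  by (rule YM[OF n1 nch]) (auto intro: Ci_len Ci_0 Ci_add Ci_sc Ci_cyc)

lemma R_dual_char: "y \<in> R_dual e n C \<longleftrightarrow> y \<in> Rvecs e n \<and> (\<forall>i\<in>{1..e}. ev \<alpha> i y \<in> Fdual n (comp_code e \<alpha> n C i))"
proof
  assume y: "y \<in> R_dual e n C"
  then have yR: "y \<in> Rvecs e n" and orth: "\<forall>x\<in>C. R_inner e x y = 0" by (auto simp: R_dual_def)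
  have ly: "length y = n" using yR by (simp add: Rvecs_def)
  have "ev \<alpha> i y \<in> Fdual n (comp_code e \<alpha> n C i)" if i: "i \<in> {1..e}" for i
    unfolding Fdual_def
  proof (intro CollectI conjI ballI)
    show "length (ev \<alpha> i y) = n" using ly by simp
    fix v assume v: "v \<in> comp_code e \<alpha> n C i"
    have x: "nu i v \<in> C" by (rule F2[OF i v])
    have "length y = length (nu i v)" using ly C_len[OF x] by simp
    then have "\<forall>j\<in>{1..e}. dotv (ev \<alpha> j (nu i v)) (ev \<alpha> j y) = 0" using orth x R_inner_0 by blast
    then show "dotv v (ev \<alpha> i y) = 0" using i ev_nu_self[OF i] by metis
  qed
  then show "y \<in> Rvecs e n \<and> (\<forall>i\<in>{1..e}. ev \<alpha> i y \<in> Fdual n (comp_code e \<alpha> n C i))" using yR by blast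
next
  assume H: "y \<in> Rvecs e n \<and> (\<forall>i\<in>{1..e}. ev \<alpha> i y \<in> Fdual n (comp_code e \<alpha> n C i))"
  have ly: "length y = n" using H by (simp add: Rvecs_def)
  have "R_inner e x y = 0" if x: "x \<in> C" for x
  proof -
    have "length y = length x" using ly C_len[OF x] by simp
    moreover have "\<forall>j\<in>{1..e}. dotv (ev \<alpha> j x) (ev \<alpha> j y) = 0"
      using H F1[OF x] unfolding Fdual_def by blast
    ultimately show ?thesis using R_inner_0 by blast
  qed
  then show "y \<in> R_dual e n C" using H by (simp add: R_dual_def)
qed

lemma LCD_char: "R_LCD e n C \<longleftrightarrow> (\<forall>i\<in>{1..e}. comp_code e \<alpha> n C i \<inter> Fdual n (comp_code e \<alpha> n C i) = {replicate n 0})"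
proof -
  have Z_C: "replicate n 0 \<in> C" using lin unfolding R_linear_code_def by auto
  have Z_dual: "replicate n 0 \<in> R_dual e n C"
  proof -
    have "R_inner e x (replicate n 0) = 0" if x: "x \<in> C" for x
    proof -
      have "(\<Sum>j<length x. x ! j * replicate n 0 ! j) = 0"
        using C_len[OF x] by (intro sum.neutral) auto
      then show ?thesis by (simp add: R_inner_def)
    qed
    then show ?thesis using C_Rvecs[OF Z_C] by (auto simp: R_dual_def)
  qed
  show ?thesis
  proof
    assume LCD: "R_LCD e n C"
    show "\<forall>i\<in>{1..e}. comp_code e \<alpha> n C i \<inter> Fdual n (comp_code e \<alpha> n C i) = {replicate n 0}"
    proof
      fix i assume i: "i \<in> {1..e}"
      have "comp_code e \<alpha> n C i \<inter> Fdual n (comp_code e \<alpha> n C i) \<subseteq> {replicate n 0}"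
      proof
        fix v assume v: "v \<in> comp_code e \<alpha> n C i \<inter> Fdual n (comp_code e \<alpha> n C i)"
        then have vC: "v \<in> comp_code e \<alpha> n C i" and vD: "v \<in> Fdual n (comp_code e \<alpha> n C i)" by auto
        have lv: "length v = n" using Ci_len[OF vC] .
        have yC: "nu i v \<in> C" by (rule F2[OF i vC])
        have "nu i v \<in> R_dual e n C"
        proof (subst R_dual_char, intro conjI ballI)
          show "nu i v \<in> Rvecs e n" using nu_Rvecs[OF lv] .
          fix j assume j: "j \<in> {1..e}"
          show "ev \<alpha> j (nu i v) \<in> Fdual n (comp_code e \<alpha> n C j)"
          proof (cases "j = i")
            case True then show ?thesis using vD ev_nu_self[OF i] by simp
          next
            case False
            then have "ev \<alpha> j (nu i v) = replicate n 0" using ev_nu[OF i j] lv by simp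
            then show ?thesis using zeros_Fdual[of "comp_code e \<alpha> n C j"] Ci_len by auto
          qed
        qed
        then have "nu i v = replicate n 0" using yC LCD unfolding R_LCD_def by blast
        then have "ev \<alpha> i (nu i v) = replicate n 0" by (simp add: ev_zeros)
        then show "v \<in> {replicate n 0}" using ev_nu_self[OF i] by simp
      qed
      moreover have "replicate n 0 \<in> comp_code e \<alpha> n C i \<inter> Fdual n (comp_code e \<alpha> n C i)"
        using Ci_0[OF i] zeros_Fdual[of "comp_code e \<alpha> n C i"] Ci_len by auto
      ultimately show "comp_code e \<alpha> n C i \<inter> Fdual n (comp_code e \<alpha> n C i) = {replicate n 0}" by blast
    qed
  next
    assume H: "\<forall>i\<in>{1..e}. comp_code e \<alpha> n C i \<inter> Fdual n (comp_code e \<alpha> n C i) = {replicate n 0}"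
    have "C \<inter> R_dual e n C \<subseteq> {replicate n 0}"
    proof
      fix y assume y: "y \<in> C \<inter> R_dual e n C"
      then have yC: "y \<in> C" and yD: "y \<in> R_dual e n C" by auto
      have evz: "ev \<alpha> j y = replicate n 0" if j: "j \<in> {1..e}" for j
      proof -
        have "ev \<alpha> j y \<in> comp_code e \<alpha> n C j" by (rule F1[OF yC j])
        moreover have "ev \<alpha> j y \<in> Fdual n (comp_code e \<alpha> n C j)" using yD R_dual_char j by blast
        ultimately show ?thesis using H j by blast
      qed
      have "y = comb e \<alpha> n (\<lambda>j. ev \<alpha> j y)" using decomp[OF C_Rvecs[OF yC]] by simp
      also have "\<dots> = replicate n 0"
      proof (rule nth_equalityI)
        show "length (comb e \<alpha> n (\<lambda>j. ev \<alpha> j y)) = length (replicate n 0)" by simp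
        fix k assume "k < length (comb e \<alpha> n (\<lambda>j. ev \<alpha> j y))"
        then have k: "k < n" by simp
        have "comb e \<alpha> n (\<lambda>j. ev \<alpha> j y) ! k = (\<Sum>j\<in>{1..e}. smult (ev \<alpha> j y ! k) (mu e \<alpha> j))"
          by (rule comb_nth[OF k])
        also have "\<dots> = (\<Sum>j\<in>{1..e}. smult 0 (mu e \<alpha> j))"
          by (rule sum.cong[OF refl]) (use evz k in simp)
        finally show "comb e \<alpha> n (\<lambda>j. ev \<alpha> j y) ! k = replicate n 0 ! k" using k by simp
      qed
      finally show "y \<in> {replicate n 0}" by simp
    qed
    then show "R_LCD e n C" unfolding R_LCD_def using Z_C Z_dual by blast
  qed
qed

lemma main_equiv: "R_LCD e n C \<longleftrightarrow> (\<forall>i\<in>{1..e}. reversible (comp_code e \<alpha> n C i))"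
  using LCD_char Ci_YM by blast

end

end



theorem theorem4p5:
  fixes p m e t n :: nat
    and \<alpha> :: "nat \<Rightarrow> 'a::{field,finite}"
    and C :: "'a poly list set"
  assumes "prime p" and "odd p"
    and "card (UNIV :: 'a set) = p ^ m"
    and "card (UNIV :: 'a set) = e * t + 1" and "e \<ge> 2" and "t \<ge> 1"
    and "(\<Prod>i\<in>{1..e}. Gpol \<alpha> i) = ue1 e"
    and "coprime n (card (UNIV :: 'a set))"
    and "R_linear_code e n C" and "is_cyclic C"
  shows "R_LCD e n C \<longleftrightarrow> (\<forall>i\<in>{1..e}. reversible (comp_code e \<alpha> n C i))"
proof -
  note cardq = assms(4) and e2 = assms(5) and t1 = assms(6) and prodG = assms(7)
    and cop = assms(8) and lin = assms(9) and cyc = assms(10)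
  have cz: "of_nat (card (UNIV :: 'a set)) = (0::'a)" by (rule of_nat_card_zero)
  have e1: "e \<ge> 1" using e2 by simp
  have ech: "of_nat e \<noteq> (0::'a)"
  proof
    assume h: "of_nat e = (0::'a)"
    have "of_nat (e * t + 1) = (0::'a)" using cz cardq by metis
    then have "1 + of_nat e * of_nat t = (0::'a)" by simp
    then show False using h by simp
  qed
  have n1: "n \<ge> 1"
  proof (rule ccontr)
    assume "\<not> n \<ge> 1"
    then have "n = 0" by simp
    then have "card (UNIV :: 'a set) = 1" using cop by simp
    then show False using cardq e2 t1 by (metis add_cancel_right_left mult_is_0 not_numeral_le_zero one_le_numeral zero_less_one_class.zero_le_one le_zero_eq less_one not_less)
  qed
  have nch: "of_nat n \<noteq> (0::'a)"
  proof
    assume "of_nat n = (0::'a)"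
    then have d1: "CHAR('a) dvd n" by (simp add: of_nat_eq_0_iff_char_dvd)
    have d2: "CHAR('a) dvd card (UNIV :: 'a set)" using cz by (simp add: of_nat_eq_0_iff_char_dvd)
    have "is_unit (CHAR('a))" using coprime_common_divisor[OF cop d1 d2] .
    then show False by simp
  qed
  have inj: "inj_on \<alpha> {1..e}"
  proof (rule inj_onI, rule ccontr)
    fix i j assume i: "i \<in> {1..e}" and j: "j \<in> {1..e}" and eq: "\<alpha> i = \<alpha> j" and ne: "i \<noteq> j"
    define a where "a = \<alpha> i"
    define q where "q = [:- a, 1:]"
    define r where "r = (\<Prod>l\<in>({1..e} - {i}) - {j}. Gpol \<alpha> l)"
    have "ue1 e = Gpol \<alpha> i * (\<Prod>l\<in>{1..e} - {i}. Gpol \<alpha> l)"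
      unfolding prodG[symmetric] using i by (simp add: prod.remove)
    also have "(\<Prod>l\<in>{1..e} - {i}. Gpol \<alpha> l) = Gpol \<alpha> j * r"
      unfolding r_def using j ne by (subst prod.remove[of _ j]) auto
    finally have U: "ue1 e = q * (q * r)" using eq by (simp add: q_def a_def Gpol_def)
    have qa: "poly q a = 0" by (simp add: q_def)
    have "poly (pderiv (ue1 e :: 'a poly)) a = 0"
      unfolding U pderiv_mult poly_add poly_mult qa by simp
    moreover have "pderiv (ue1 e :: 'a poly) = monom (of_nat e) (e - 1)"
      by (simp add: ue1_def pderiv_monom pderiv_diff)
    ultimately have z: "of_nat e * a ^ (e - 1) = 0" by (simp add: poly_monom)
    have "poly (ue1 e :: 'a poly) a = 0" unfolding U by (simp add: q_def)
    then have "a ^ e = 1" by (simp add: ue1_def poly_monom)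
    then have "a \<noteq> 0" using e1 by (metis one_neq_zero power_0_left not_one_le_zero)
    then show False using z ech by simp
  qed
  show ?thesis using main_equiv[OF e1 prodG inj n1 nch lin cyc] .
qed


end
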